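(* Let $\mathcal{C}$ be a binary linear code of length $n$ and dimension $k$, used with BPSK (codeword $\underline c$ mapped to $\underline s$ with $s_t=1-2c_t$) over the AWGN channel $\underline y=\underline s+\underline z$, $\underline z$ with i.i.d. $\mathcal{N}(0,\sigma^2)$ components, $\sigma>0$, and maximum-likelihood (minimum Euclidean distance) decoding. Assume the all-zero codeword $\underline c^{(0)}$ is transmitted and let $E=\bigcup_{\underline s\neq\underline s^{(0)}}\{\underline s^{(0)}\to\underline s\}$ be the error event. Let $\underline c^{(1)}$ be any fixed codeword with $W_H(\underline c^{(1)})=d_1\ge1$, and let $\{B_{i,j}\}$ be the triangle spectrum of $\mathcal{C}$ with respect to $\underline c^{(1)}$. Then $${\rm Pr}\{E\}\le-(2^k-3)\,Q(\sqrt{d_1}/\sigma)+\sum_{1\le i,j\le n}B_{i,j}\,p_3(i,j),$$ where $p_3(i,j)=1-\iint_{\Omega}f(\xi_1)f(\xi_2)\,d\xi_1d\xi_2$ with $f(x)=\frac{1}{\sqrt{2\pi}\sigma}e^{-x^2/(2\sigma^2)}$, $\Omega=\{(\xi_1,\xi_2):\xi_1<\sqrt{d_1},\ \xi_1\cos\theta+\xi_2\sin\theta<\sqrt{i}\}$ and $\theta\in[0,\pi]$ with $\cos\theta=(d_1+i-j)/(2\sqrt{d_1 i})$.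
   Context: $W_H$ is Hamming weight; $Q(x)=\int_x^\infty\frac{1}{\sqrt{2\pi}}e^{-t^2/2}dt$. The event $\{\underline s^{(0)}\to\underline s\}$ is $\{\underline y:\|\underline y-\underline s\|\le\|\underline y-\underline s^{(0)}\|\}$. The triangle spectrum with respect to $\underline c^{(1)}$: $B_{i,j}$ is the number of codewords $\underline c$ with $W_H(\underline c)=i$ and $W_H(\underline c-\underline c^{(1)})=j$ (so the sum over $i,j\ge1$ counts all codewords other than $\underline c^{(0)}$ and $\underline c^{(1)}$). For such a codeword $\underline c$ with bipolar image $\underline s$, $p_3(i,j)$ equals ${\rm Pr}\{(\underline s^{(0)}\to\underline s^{(1)})\cup(\underline s^{(0)}\to\underline s)\}$. *)

theory Defs
  imports "HOL-Probability.Probability"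
begin

text \<open>Binary words of length n are functions nat => bool that are False outside {0..<n}.\<close>

definition words :: "nat \<Rightarrow> (nat \<Rightarrow> bool) set" where
  "words n = {c. \<forall>t. n \<le> t \<longrightarrow> \<not> c t}"

definition zero_word :: "nat \<Rightarrow> bool" where
  "zero_word = (\<lambda>t. False)"

definition word_add :: "(nat \<Rightarrow> bool) \<Rightarrow> (nat \<Rightarrow> bool) \<Rightarrow> (nat \<Rightarrow> bool)" where
  "word_add c d = (\<lambda>t. c t \<noteq> d t)"

text \<open>Binary linear code of length n: a subspace of GF(2)^n, i.e. a subset of the words
  containing zero and closed under addition (over GF(2) closure under scalars is automatic).
  Its dimension is k iff it has 2^k elements.\<close>

definition binary_linear_code :: "nat \<Rightarrow> nat \<Rightarrow> (nat \<Rightarrow> bool) set \<Rightarrow> bool" where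
  "binary_linear_code n k C \<longleftrightarrow>
     C \<subseteq> words n \<and> zero_word \<in> C \<and> (\<forall>c\<in>C. \<forall>d\<in>C. word_add c d \<in> C) \<and> card C = 2 ^ k"

definition hamming_weight :: "nat \<Rightarrow> (nat \<Rightarrow> bool) \<Rightarrow> nat" where
  "hamming_weight n c = card {t. t < n \<and> c t}"

definition bpsk :: "(nat \<Rightarrow> bool) \<Rightarrow> nat \<Rightarrow> real" where
  "bpsk c t = (if c t then -1 else 1)"

definition sqdist :: "nat \<Rightarrow> (nat \<Rightarrow> real) \<Rightarrow> (nat \<Rightarrow> real) \<Rightarrow> real" where
  "sqdist n y s = (\<Sum>t<n. (y t - s t)\<^sup>2)"

definition noise :: "nat \<Rightarrow> real \<Rightarrow> (nat \<Rightarrow> real) measure" where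
  "noise n \<sigma> = PiM {..<n} (\<lambda>_. density lborel (normal_density 0 \<sigma>))"

definition error_event :: "nat \<Rightarrow> real \<Rightarrow> (nat \<Rightarrow> bool) set \<Rightarrow> (nat \<Rightarrow> real) set" where
  "error_event n \<sigma> C = {z \<in> space (noise n \<sigma>).
     \<exists>c\<in>C. c \<noteq> zero_word \<and>
       sqdist n (\<lambda>t. bpsk zero_word t + z t) (bpsk c)
         \<le> sqdist n (\<lambda>t. bpsk zero_word t + z t) (bpsk zero_word)}"

definition Qfun :: "real \<Rightarrow> real" where
  "Qfun x = (LBINT t:{x<..}. 1 / sqrt (2 * pi) * exp (- t\<^sup>2 / 2))"

definition triangle_spectrum ::
  "nat \<Rightarrow> (nat \<Rightarrow> bool) set \<Rightarrow> (nat \<Rightarrow> bool) \<Rightarrow> nat \<Rightarrow> nat \<Rightarrow> nat" where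
  "triangle_spectrum n C c1 i j =
     card {c \<in> C. hamming_weight n c = i \<and> hamming_weight n (word_add c c1) = j}"

definition gauss_f :: "real \<Rightarrow> real \<Rightarrow> real" where
  "gauss_f \<sigma> x = 1 / (sqrt (2 * pi) * \<sigma>) * exp (- x\<^sup>2 / (2 * \<sigma>\<^sup>2))"

definition p3 :: "real \<Rightarrow> nat \<Rightarrow> nat \<Rightarrow> nat \<Rightarrow> real" where
  "p3 \<sigma> d1 i j =
     (let \<theta> = arccos ((real d1 + real i - real j) / (2 * sqrt (real d1 * real i)));
          \<Omega> = {(\<xi>1, \<xi>2). \<xi>1 < sqrt (real d1) \<and> \<xi>1 * cos \<theta> + \<xi>2 * sin \<theta> < sqrt (real i)}
      in 1 - (\<integral>\<xi>. indicator \<Omega> \<xi> * gauss_f \<sigma> (fst \<xi>) * gauss_f \<sigma> (snd \<xi>) \<partial>(lborel \<Otimes>\<^sub>M lborel)))"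

end

theory Submission imports Defs begin


lemma bp_iff: "(f :: real \<times> real \<Rightarrow> 'b::topological_space) \<in> borel_measurable (borel \<Otimes>\<^sub>M borel) \<longleftrightarrow> f \<in> borel_measurable borel"
  by (simp add: borel_prod)

lemma meas_pair_borel: "(G :: real \<times> real \<Rightarrow> ennreal) \<in> borel_measurable borel \<Longrightarrow> G \<in> borel_measurable (lborel \<Otimes>\<^sub>M lborel)"
  by (simp add: lborel_prod)

lemma shear1:
  fixes G :: "real \<times> real \<Rightarrow> ennreal"
  assumes [measurable]: "G \<in> borel_measurable borel"
  shows "(\<integral>\<^sup>+v. G (fst v + a * snd v, snd v) \<partial>(lborel \<Otimes>\<^sub>M lborel)) = (\<integral>\<^sup>+v. G v \<partial>(lborel \<Otimes>\<^sub>M lborel))"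
proof -
  have "(\<integral>\<^sup>+v. G (fst v + a * snd v, snd v) \<partial>(lborel \<Otimes>\<^sub>M lborel))
      = (\<integral>\<^sup>+y. \<integral>\<^sup>+x. G (x + a * y, y) \<partial>lborel \<partial>lborel)"
    by (subst lborel_pair.nn_integral_snd[symmetric]) auto
  also have "\<dots> = (\<integral>\<^sup>+y. \<integral>\<^sup>+x. G (x, y) \<partial>lborel \<partial>lborel)"
  proof (rule nn_integral_cong)
    fix y :: real
    show "(\<integral>\<^sup>+x. G (x + a * y, y) \<partial>lborel) = (\<integral>\<^sup>+x. G (x, y) \<partial>lborel)"
      using nn_integral_real_affine[of "\<lambda>x. G (x, y)" 1 "a*y"] by (simp add: add.commute)
  qed
  also have "\<dots> = (\<integral>\<^sup>+v. G v \<partial>(lborel \<Otimes>\<^sub>M lborel))"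
    by (subst lborel_pair.nn_integral_snd[symmetric]) (auto intro: meas_pair_borel)
  finally show ?thesis .
qed

lemma shear2:
  fixes G :: "real \<times> real \<Rightarrow> ennreal"
  assumes [measurable]: "G \<in> borel_measurable borel"
  shows "(\<integral>\<^sup>+v. G (fst v, snd v + b * fst v) \<partial>(lborel \<Otimes>\<^sub>M lborel)) = (\<integral>\<^sup>+v. G v \<partial>(lborel \<Otimes>\<^sub>M lborel))"
proof -
  have "(\<integral>\<^sup>+v. G (fst v, snd v + b * fst v) \<partial>(lborel \<Otimes>\<^sub>M lborel))
      = (\<integral>\<^sup>+x. \<integral>\<^sup>+y. G (x, y + b * x) \<partial>lborel \<partial>lborel)"
    by (subst lborel.nn_integral_fst[symmetric]) auto
  also have "\<dots> = (\<integral>\<^sup>+x. \<integral>\<^sup>+y. G (x, y) \<partial>lborel \<partial>lborel)"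
  proof (rule nn_integral_cong)
    fix x :: real
    show "(\<integral>\<^sup>+y. G (x, y + b * x) \<partial>lborel) = (\<integral>\<^sup>+y. G (x, y) \<partial>lborel)"
      using nn_integral_real_affine[of "\<lambda>y. G (x, y)" 1 "b*x"] by (simp add: add.commute)
  qed
  also have "\<dots> = (\<integral>\<^sup>+v. G v \<partial>(lborel \<Otimes>\<^sub>M lborel))"
    by (subst lborel.nn_integral_fst[symmetric]) (auto intro: meas_pair_borel)
  finally show ?thesis .
qed

lemma rot_lborel0:
  fixes G :: "real \<times> real \<Rightarrow> ennreal"
  assumes GG: "G \<in> borel_measurable borel" and pq: "p\<^sup>2 + q\<^sup>2 = 1" and p: "p \<noteq> -1"
  shows "(\<integral>\<^sup>+v. G (p * fst v + q * snd v, - q * fst v + p * snd v) \<partial>(lborel \<Otimes>\<^sub>M lborel)) = (\<integral>\<^sup>+v. G v \<partial>(lborel \<Otimes>\<^sub>M lborel))"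
proof -
  have [measurable]: "G \<in> borel_measurable (borel \<Otimes>\<^sub>M borel)" using GG bp_iff by blast
  define \<alpha> where "\<alpha> = q / (1 + p)"
  define \<beta> where "\<beta> = - q"
  have p1: "1 + p \<noteq> 0" using p by auto
  define G1 where "G1 = (\<lambda>v. G (fst v + \<alpha> * snd v, snd v))"
  define G2 where "G2 = (\<lambda>v. G1 (fst v, snd v + \<beta> * fst v))"
  have g1m[measurable]: "G1 \<in> borel_measurable borel" unfolding G1_def bp_iff[symmetric] by measurable
  have g2m[measurable]: "G2 \<in> borel_measurable borel" unfolding G2_def bp_iff[symmetric] by measurable
  have h1: "\<alpha> * (1 + p) = q" unfolding \<alpha>_def using p1 by simp
  have h2: "\<alpha> * q = 1 - p"
  proof -
    have "q\<^sup>2 = (1 - p) * (1 + p)" using pq by (simp add: algebra_simps power2_eq_square)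
    then show ?thesis unfolding \<alpha>_def using p1 by (simp add: field_simps power2_eq_square)
  qed
  have e1: "p * x + q * y = x + \<alpha> * y + \<alpha> * (y + \<beta> * (x + \<alpha> * y))" for x y
  proof -
    have "x + \<alpha> * y + \<alpha> * (y + \<beta> * (x + \<alpha> * y)) = x + 2*\<alpha>*y - (\<alpha>*q)*x - (\<alpha>*q)*\<alpha>*y"
      by (simp add: \<beta>_def algebra_simps)
    also have "\<dots> = p * x + (\<alpha> * (1 + p)) * y" unfolding h2 by (simp add: algebra_simps)
    finally show ?thesis unfolding h1 by simp
  qed
  have e2: "- q * x + p * y = y + \<beta> * (x + \<alpha> * y)" for x y
  proof -
    have "y + \<beta> * (x + \<alpha> * y) = y - q * x - (\<alpha> * q) * y" by (simp add: \<beta>_def algebra_simps)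
    then show ?thesis unfolding h2 by (simp add: algebra_simps)
  qed
  have "(\<lambda>v. G (p * fst v + q * snd v, - q * fst v + p * snd v)) = (\<lambda>v. G2 (fst v + \<alpha> * snd v, snd v))"
    unfolding G2_def G1_def using e1 e2 by (auto simp: fun_eq_iff)
  then have "(\<integral>\<^sup>+v. G (p * fst v + q * snd v, - q * fst v + p * snd v) \<partial>(lborel \<Otimes>\<^sub>M lborel))
     = (\<integral>\<^sup>+v. G2 v \<partial>(lborel \<Otimes>\<^sub>M lborel))" using shear1[OF g2m, of \<alpha>] by simp
  also have "\<dots> = (\<integral>\<^sup>+v. G1 v \<partial>(lborel \<Otimes>\<^sub>M lborel))" unfolding G2_def by (rule shear2) (rule g1m)
  also have "\<dots> = (\<integral>\<^sup>+v. G v \<partial>(lborel \<Otimes>\<^sub>M lborel))" unfolding G1_def by (rule shear1) (simp add: GG)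
  finally show ?thesis .
qed

lemma rot_lborel:
  fixes G :: "real \<times> real \<Rightarrow> ennreal"
  assumes GG: "G \<in> borel_measurable borel" and pq: "p\<^sup>2 + q\<^sup>2 = 1"
  shows "(\<integral>\<^sup>+v. G (p * fst v + q * snd v, - q * fst v + p * snd v) \<partial>(lborel \<Otimes>\<^sub>M lborel)) = (\<integral>\<^sup>+v. G v \<partial>(lborel \<Otimes>\<^sub>M lborel))"
proof (cases "p = -1")
  case False then show ?thesis using rot_lborel0[OF assms] by simp
next
  case True
  then have q: "q = 0" using pq by (simp add: power2_eq_square)
  have [measurable]: "G \<in> borel_measurable (borel \<Otimes>\<^sub>M borel)" using GG bp_iff by blast
  define G1 where "G1 = (\<lambda>v. G (snd v, - fst v))"
  have [measurable]: "G1 \<in> borel_measurable borel" unfolding G1_def bp_iff[symmetric] by measurable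
  have "(\<integral>\<^sup>+v. G (p * fst v + q * snd v, - q * fst v + p * snd v) \<partial>(lborel \<Otimes>\<^sub>M lborel))
      = (\<integral>\<^sup>+v. G1 (0 * fst v + 1 * snd v, - 1 * fst v + 0 * snd v) \<partial>(lborel \<Otimes>\<^sub>M lborel))"
    unfolding G1_def True q by simp
  also have "\<dots> = (\<integral>\<^sup>+v. G1 v \<partial>(lborel \<Otimes>\<^sub>M lborel))" by (rule rot_lborel0) (auto simp: GG)
  also have "\<dots> = (\<integral>\<^sup>+v. G (0 * fst v + 1 * snd v, - 1 * fst v + 0 * snd v) \<partial>(lborel \<Otimes>\<^sub>M lborel))"
    unfolding G1_def by simp
  also have "\<dots> = (\<integral>\<^sup>+v. G v \<partial>(lborel \<Otimes>\<^sub>M lborel))" by (rule rot_lborel0) (auto simp: GG)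
  finally show ?thesis .
qed

definition NN :: "real \<Rightarrow> real measure" where
  "NN \<sigma> = density lborel (\<lambda>x. ennreal (normal_density 0 \<sigma> x))"

lemma sets_NN[simp, measurable_cong]: "sets (NN \<sigma>) = sets borel"
  by (simp add: NN_def)

lemma space_NN[simp]: "space (NN \<sigma>) = UNIV"
  by (simp add: NN_def)

lemma prob_NN: "0 < \<sigma> \<Longrightarrow> prob_space (NN \<sigma>)"
  unfolding NN_def by (rule prob_space_normal_density) 

lemma iter_N:
  fixes F :: "real \<times> real \<Rightarrow> ennreal"
  assumes FF: "F \<in> borel_measurable borel"
  shows "(\<integral>\<^sup>+x. \<integral>\<^sup>+y. F (x, y) \<partial>NN \<sigma> \<partial>NN \<sigma>)
     = (\<integral>\<^sup>+v. F v * ennreal (normal_density 0 \<sigma> (fst v) * normal_density 0 \<sigma> (snd v)) \<partial>(lborel \<Otimes>\<^sub>M lborel))"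
proof -
  have [measurable]: "F \<in> borel_measurable (borel \<Otimes>\<^sub>M borel)" using FF bp_iff by blast
  have "(\<integral>\<^sup>+x. \<integral>\<^sup>+y. F (x, y) \<partial>NN \<sigma> \<partial>NN \<sigma>)
      = (\<integral>\<^sup>+x. ennreal (normal_density 0 \<sigma> x) * (\<integral>\<^sup>+y. ennreal (normal_density 0 \<sigma> y) * F (x, y) \<partial>lborel) \<partial>lborel)"
    unfolding NN_def
    by (subst nn_integral_density) (auto simp: nn_integral_density)
  also have "\<dots> = (\<integral>\<^sup>+x. \<integral>\<^sup>+y. F (x, y) * ennreal (normal_density 0 \<sigma> x * normal_density 0 \<sigma> y) \<partial>lborel \<partial>lborel)"
    by (subst nn_integral_cmult[symmetric]) (auto simp: ennreal_mult mult_ac)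
  also have "\<dots> = (\<integral>\<^sup>+v. F v * ennreal (normal_density 0 \<sigma> (fst v) * normal_density 0 \<sigma> (snd v)) \<partial>(lborel \<Otimes>\<^sub>M lborel))"
    by (subst lborel.nn_integral_fst[symmetric]) (auto intro: meas_pair_borel)
  finally show ?thesis .
qed

lemma rot_N:
  fixes H :: "real \<times> real \<Rightarrow> ennreal"
  assumes HH: "H \<in> borel_measurable borel" and pq: "p\<^sup>2 + q\<^sup>2 = 1"
  shows "(\<integral>\<^sup>+x. \<integral>\<^sup>+y. H (p * x + q * y, - q * x + p * y) \<partial>NN \<sigma> \<partial>NN \<sigma>)
       = (\<integral>\<^sup>+x. \<integral>\<^sup>+y. H (x, y) \<partial>NN \<sigma> \<partial>NN \<sigma>)"
proof -
  have [measurable]: "H \<in> borel_measurable (borel \<Otimes>\<^sub>M borel)" using HH bp_iff by blast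
  define \<rho> where "\<rho> = (\<lambda>v::real\<times>real. ennreal (normal_density 0 \<sigma> (fst v) * normal_density 0 \<sigma> (snd v)))"
  have \<rho>m: "\<rho> \<in> borel_measurable borel" unfolding \<rho>_def bp_iff[symmetric] by measurable
  have \<rho>rot: "\<rho> (p * x + q * y, - q * x + p * y) = \<rho> (x, y)" for x y
  proof -
    have "(p * x + q * y)\<^sup>2 + (- q * x + p * y)\<^sup>2 = (p\<^sup>2 + q\<^sup>2) * (x\<^sup>2 + y\<^sup>2)"
      by (simp add: power2_eq_square algebra_simps)
    then have s: "(p * x + q * y)\<^sup>2 + (- q * x + p * y)\<^sup>2 = x\<^sup>2 + y\<^sup>2" using pq by simp
    have "normal_density 0 \<sigma> a * normal_density 0 \<sigma> b = 1 / sqrt (2 * pi * \<sigma>\<^sup>2) * (1 / sqrt (2 * pi * \<sigma>\<^sup>2)) * exp (- (a\<^sup>2 + b\<^sup>2) / (2 * \<sigma>\<^sup>2))" for a b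
      unfolding normal_density_def by (simp add: mult_exp_exp add_divide_distrib diff_divide_distrib)
    then show ?thesis unfolding \<rho>_def using s by simp
  qed
  have "(\<integral>\<^sup>+x. \<integral>\<^sup>+y. H (p * x + q * y, - q * x + p * y) \<partial>NN \<sigma> \<partial>NN \<sigma>)
     = (\<integral>\<^sup>+v. H (p * fst v + q * snd v, - q * fst v + p * snd v) * \<rho> v \<partial>(lborel \<Otimes>\<^sub>M lborel))"
  proof -
    have m: "(\<lambda>v. H (p * fst v + q * snd v, - q * fst v + p * snd v)) \<in> borel_measurable borel"
      unfolding bp_iff[symmetric] by measurable
    show ?thesis unfolding \<rho>_def using iter_N[OF m, of \<sigma>] by simp
  qed
  also have "\<dots> = (\<integral>\<^sup>+v. (\<lambda>w. H w * \<rho> w) (p * fst v + q * snd v, - q * fst v + p * snd v) \<partial>(lborel \<Otimes>\<^sub>M lborel))"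
    by (rule nn_integral_cong) (use \<rho>rot in auto)
  also have "\<dots> = (\<integral>\<^sup>+v. H v * \<rho> v \<partial>(lborel \<Otimes>\<^sub>M lborel))"
    by (rule rot_lborel[OF _ pq]) (use \<rho>m HH in measurable)
  also have "\<dots> = (\<integral>\<^sup>+x. \<integral>\<^sup>+y. H (x, y) \<partial>NN \<sigma> \<partial>NN \<sigma>)"
    unfolding \<rho>_def by (rule iter_N[symmetric, OF HH])
  finally show ?thesis .
qed

context
  fixes \<sigma> :: real
  assumes \<sigma>: "0 < \<sigma>"
begin

interpretation N: prob_space "NN \<sigma>" using prob_NN[OF \<sigma>] .
interpretation P: product_prob_space "\<lambda>_. NN \<sigma>"
  using prob_NN[OF \<sigma>] by unfold_locales

lemma N_UNIV[simp]: "emeasure (NN \<sigma>) UNIV = 1"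
  using N.emeasure_space_1 by simp

lemma N_const: "(\<integral>\<^sup>+y. c \<partial>NN \<sigma>) = c"
  by simp

lemma D1:
  fixes h :: "real \<Rightarrow> ennreal"
  assumes [measurable]: "h \<in> borel_measurable borel" and a: "0 \<le> a" and b: "0 \<le> b"
  shows "(\<integral>\<^sup>+x. \<integral>\<^sup>+y. h (sqrt a * x + sqrt b * y) \<partial>NN \<sigma> \<partial>NN \<sigma>) = (\<integral>\<^sup>+x. h (sqrt (a + b) * x) \<partial>NN \<sigma>)"
proof (cases "a + b = 0")
  case True
  then have "a = 0" "b = 0" using a b by auto
  then show ?thesis by (simp add: N_const)
next
  case False
  then have ab: "0 < a + b" using a b by auto
  define p where "p = sqrt (a / (a + b))"
  define q where "q = sqrt (b / (a + b))"
  have "p\<^sup>2 = a / (a + b)" unfolding p_def using a ab by simp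
  moreover have "q\<^sup>2 = b / (a + b)" unfolding q_def using b ab by simp
  ultimately have pq: "p\<^sup>2 + q\<^sup>2 = 1" using ab by (simp add: add_divide_distrib[symmetric])
  have e: "sqrt a * x + sqrt b * y = sqrt (a + b) * (p * x + q * y)" for x y
    unfolding p_def q_def using a b ab by (simp add: real_sqrt_divide field_simps)
  define H where "H = (\<lambda>v::real\<times>real. h (sqrt (a + b) * fst v))"
  have Hm: "H \<in> borel_measurable borel" unfolding H_def bp_iff[symmetric] by measurable
  have "(\<integral>\<^sup>+x. \<integral>\<^sup>+y. h (sqrt a * x + sqrt b * y) \<partial>NN \<sigma> \<partial>NN \<sigma>)
      = (\<integral>\<^sup>+x. \<integral>\<^sup>+y. H (p * x + q * y, - q * x + p * y) \<partial>NN \<sigma> \<partial>NN \<sigma>)"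
    unfolding H_def e by simp
  also have "\<dots> = (\<integral>\<^sup>+x. \<integral>\<^sup>+y. H (x, y) \<partial>NN \<sigma> \<partial>NN \<sigma>)" by (rule rot_N[OF Hm pq])
  also have "\<dots> = (\<integral>\<^sup>+x. h (sqrt (a + b) * x) \<partial>NN \<sigma>)" unfolding H_def by (simp add: N_const)
  finally show ?thesis .
qed

lemma BL:
  fixes h :: "real \<Rightarrow> ennreal"
  assumes A: "finite A" and hm: "h \<in> borel_measurable borel"
  shows "(\<integral>\<^sup>+z. h (\<Sum>t\<in>A. z t) \<partial>PiM A (\<lambda>_. NN \<sigma>)) = (\<integral>\<^sup>+x. h (sqrt (card A) * x) \<partial>NN \<sigma>)"
  using A hm
proof (induction A arbitrary: h rule: finite_induct)
  case empty
  then show ?case by (simp add: PiM_empty N_const)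
next
  case (insert t A)
  note [measurable] = insert.prems
  have m1: "(\<lambda>z. h (\<Sum>t\<in>insert t A. z t)) \<in> borel_measurable (PiM (insert t A) (\<lambda>_. NN \<sigma>))"
    by measurable
  have "(\<integral>\<^sup>+z. h (\<Sum>t\<in>insert t A. z t) \<partial>PiM (insert t A) (\<lambda>_. NN \<sigma>))
     = (\<integral>\<^sup>+x. \<integral>\<^sup>+y. h (\<Sum>s\<in>insert t A. (x(t := y)) s) \<partial>NN \<sigma> \<partial>PiM A (\<lambda>_. NN \<sigma>))"
    by (rule P.product_nn_integral_insert[OF insert(1,2) m1])
  also have "\<dots> = (\<integral>\<^sup>+x. (\<lambda>s. \<integral>\<^sup>+y. h (sqrt 1 * y + s) \<partial>NN \<sigma>) (\<Sum>s\<in>A. x s) \<partial>PiM A (\<lambda>_. NN \<sigma>))"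
  proof (rule nn_integral_cong)
    fix x
    have "(\<Sum>s\<in>insert t A. (x(t := y)) s) = y + (\<Sum>s\<in>A. x s)" for y :: real
    proof -
      have "(\<Sum>s\<in>A. (x(t := y)) s) = (\<Sum>s\<in>A. x s)" using insert(2) by (intro sum.cong) auto
      then show ?thesis using insert(1,2) by simp
    qed
    then show "(\<integral>\<^sup>+y. h (\<Sum>s\<in>insert t A. (x(t := y)) s) \<partial>NN \<sigma>) = (\<lambda>s. \<integral>\<^sup>+y. h (sqrt 1 * y + s) \<partial>NN \<sigma>) (\<Sum>s\<in>A. x s)"
      by simp
  qed
  also have "\<dots> = (\<integral>\<^sup>+x. (\<lambda>s. \<integral>\<^sup>+y. h (sqrt 1 * y + s) \<partial>NN \<sigma>) (sqrt (card A) * x) \<partial>NN \<sigma>)"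
    by (rule insert.IH) measurable
  also have "\<dots> = (\<integral>\<^sup>+x. \<integral>\<^sup>+y. h (sqrt (card A) * x + sqrt 1 * y) \<partial>NN \<sigma> \<partial>NN \<sigma>)"
    by (simp add: add.commute)
  also have "\<dots> = (\<integral>\<^sup>+x. h (sqrt (real (card A) + 1) * x) \<partial>NN \<sigma>)"
    by (rule D1) auto
  also have "\<dots> = (\<integral>\<^sup>+x. h (sqrt (card (insert t A)) * x) \<partial>NN \<sigma>)"
    using insert(1,2) by (simp add: add.commute)
  finally show ?case .
qed

lemma PM_prob: "prob_space (PiM T (\<lambda>_. NN \<sigma>))"
  by (rule prob_space_PiM) (rule prob_NN[OF \<sigma>])

lemma PM_space[simp]: "emeasure (PiM T (\<lambda>_. NN \<sigma>)) (space (PiM T (\<lambda>_. NN \<sigma>))) = 1"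
  by (rule prob_space.emeasure_space_1[OF PM_prob])

lemma PM_const: "(\<integral>\<^sup>+y. c \<partial>PiM T (\<lambda>_. NN \<sigma>)) = c"
  by (subst nn_integral_const) (simp only: PM_space mult_1_right)

lemma sum_meas: "A \<subseteq> T \<Longrightarrow> (\<lambda>z. \<Sum>t\<in>A. z t :: real) \<in> borel_measurable (PiM T (\<lambda>_. NN \<sigma>))"
  by (rule borel_measurable_sum) (auto intro!: measurable_component_singleton)

lemma sum_merge1: "(\<Sum>s\<in>A. merge A J (x, y) s) = (\<Sum>s\<in>A. x s)"
  by (rule sum.cong) (auto simp: merge_def)

lemma sum_merge2: "B \<inter> A = {} \<Longrightarrow> B \<subseteq> J \<Longrightarrow> (\<Sum>s\<in>B. merge A J (x, y) s) = (\<Sum>s\<in>B. y s)"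
  by (rule sum.cong) (auto simp: merge_def)

lemma L1:
  fixes g :: "real \<Rightarrow> ennreal"
  assumes T: "finite T" and AT: "A \<subseteq> T" and [measurable]: "g \<in> borel_measurable borel"
  shows "(\<integral>\<^sup>+z. g (\<Sum>t\<in>A. z t) \<partial>PiM T (\<lambda>_. NN \<sigma>)) = (\<integral>\<^sup>+x. g (sqrt (card A) * x) \<partial>NN \<sigma>)"
proof -
  have TT: "T = A \<union> (T - A)" using AT by auto
  have fA: "finite A" using T AT finite_subset by auto
  note [measurable] = sum_meas[OF AT]
  have "(\<integral>\<^sup>+z. g (\<Sum>t\<in>A. z t) \<partial>PiM T (\<lambda>_. NN \<sigma>))
      = (\<integral>\<^sup>+x. \<integral>\<^sup>+y. g (\<Sum>t\<in>A. merge A (T - A) (x, y) t) \<partial>PiM (T - A) (\<lambda>_. NN \<sigma>) \<partial>PiM A (\<lambda>_. NN \<sigma>))"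
    apply (subst TT)
    apply (rule P.product_nn_integral_fold)
    using T fA TT by auto
  also have "\<dots> = (\<integral>\<^sup>+x. g (\<Sum>t\<in>A. x t) \<partial>PiM A (\<lambda>_. NN \<sigma>))"
    by (simp add: sum_merge1 PM_const)
  also have "\<dots> = (\<integral>\<^sup>+x. g (sqrt (card A) * x) \<partial>NN \<sigma>)"
    by (rule BL[OF fA]) measurable
  finally show ?thesis .
qed

lemma L2:
  fixes g :: "real \<times> real \<Rightarrow> ennreal"
  assumes T: "finite T" and AT: "A \<subseteq> T" and BT: "B \<subseteq> T" and AB: "A \<inter> B = {}"
    and [measurable]: "g \<in> borel_measurable (borel \<Otimes>\<^sub>M borel)"
  shows "(\<integral>\<^sup>+z. g (\<Sum>t\<in>A. z t, \<Sum>t\<in>B. z t) \<partial>PiM T (\<lambda>_. NN \<sigma>))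
    = (\<integral>\<^sup>+x. \<integral>\<^sup>+y. g (sqrt (card A) * x, sqrt (card B) * y) \<partial>NN \<sigma> \<partial>NN \<sigma>)"
proof -
  have TT: "T = A \<union> (T - A)" using AT by auto
  have fA: "finite A" using T AT finite_subset by auto
  have BT': "B \<subseteq> T - A" using BT AB by auto
  note [measurable] = sum_meas[OF AT] sum_meas[OF BT]
  have "(\<integral>\<^sup>+z. g (\<Sum>t\<in>A. z t, \<Sum>t\<in>B. z t) \<partial>PiM T (\<lambda>_. NN \<sigma>))
      = (\<integral>\<^sup>+x. \<integral>\<^sup>+y. g (\<Sum>t\<in>A. merge A (T - A) (x, y) t, \<Sum>t\<in>B. merge A (T - A) (x, y) t) \<partial>PiM (T - A) (\<lambda>_. NN \<sigma>) \<partial>PiM A (\<lambda>_. NN \<sigma>))"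
    apply (subst TT)
    apply (rule P.product_nn_integral_fold)
    using T fA TT by auto
  also have "\<dots> = (\<integral>\<^sup>+x. \<integral>\<^sup>+y. g (\<Sum>t\<in>A. x t, \<Sum>t\<in>B. y t) \<partial>PiM (T - A) (\<lambda>_. NN \<sigma>) \<partial>PiM A (\<lambda>_. NN \<sigma>))"
    using AB BT' by (simp add: sum_merge1 sum_merge2 Int_commute)
  also have "\<dots> = (\<integral>\<^sup>+x. \<integral>\<^sup>+w. g (\<Sum>t\<in>A. x t, sqrt (card B) * w) \<partial>NN \<sigma> \<partial>PiM A (\<lambda>_. NN \<sigma>))"
    by (rule nn_integral_cong, rule L1) (use T BT' in auto)
  also have "\<dots> = (\<integral>\<^sup>+x. (\<lambda>s. \<integral>\<^sup>+w. g (s, sqrt (card B) * w) \<partial>NN \<sigma>) (sqrt (card A) * x) \<partial>NN \<sigma>)"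
    by (rule BL[OF fA]) measurable
  finally show ?thesis by simp
qed

lemma L3:
  fixes g :: "real \<times> real \<times> real \<Rightarrow> ennreal"
  assumes T: "finite T" and AT: "A \<subseteq> T" and BT: "B \<subseteq> T" and CT: "C \<subseteq> T"
    and AB: "A \<inter> B = {}" and AC: "A \<inter> C = {}" and BC: "B \<inter> C = {}"
    and [measurable]: "g \<in> borel_measurable (borel \<Otimes>\<^sub>M borel \<Otimes>\<^sub>M borel)"
  shows "(\<integral>\<^sup>+z. g (\<Sum>t\<in>A. z t, \<Sum>t\<in>B. z t, \<Sum>t\<in>C. z t) \<partial>PiM T (\<lambda>_. NN \<sigma>))
    = (\<integral>\<^sup>+x. \<integral>\<^sup>+y. \<integral>\<^sup>+w. g (sqrt (card A) * x, sqrt (card B) * y, sqrt (card C) * w) \<partial>NN \<sigma> \<partial>NN \<sigma> \<partial>NN \<sigma>)"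
proof -
  have TT: "T = A \<union> (T - A)" using AT by auto
  have fA: "finite A" using T AT finite_subset by auto
  have BT': "B \<subseteq> T - A" using BT AB by auto
  have CT': "C \<subseteq> T - A" using CT AC by auto
  note [measurable] = sum_meas[OF AT] sum_meas[OF BT] sum_meas[OF CT]
  have "(\<integral>\<^sup>+z. g (\<Sum>t\<in>A. z t, \<Sum>t\<in>B. z t, \<Sum>t\<in>C. z t) \<partial>PiM T (\<lambda>_. NN \<sigma>))
      = (\<integral>\<^sup>+x. \<integral>\<^sup>+y. g (\<Sum>t\<in>A. merge A (T - A) (x, y) t, \<Sum>t\<in>B. merge A (T - A) (x, y) t, \<Sum>t\<in>C. merge A (T - A) (x, y) t) \<partial>PiM (T - A) (\<lambda>_. NN \<sigma>) \<partial>PiM A (\<lambda>_. NN \<sigma>))"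
    apply (subst TT)
    apply (rule P.product_nn_integral_fold)
    using T fA TT by auto
  also have "\<dots> = (\<integral>\<^sup>+x. \<integral>\<^sup>+y. g (\<Sum>t\<in>A. x t, \<Sum>t\<in>B. y t, \<Sum>t\<in>C. y t) \<partial>PiM (T - A) (\<lambda>_. NN \<sigma>) \<partial>PiM A (\<lambda>_. NN \<sigma>))"
    using AB BT' AC CT' by (simp add: sum_merge1 sum_merge2 Int_commute)
  also have "\<dots> = (\<integral>\<^sup>+x. \<integral>\<^sup>+y. \<integral>\<^sup>+w. g (\<Sum>t\<in>A. x t, sqrt (card B) * y, sqrt (card C) * w) \<partial>NN \<sigma> \<partial>NN \<sigma> \<partial>PiM A (\<lambda>_. NN \<sigma>))"
  proof (rule nn_integral_cong)
    fix x
    show "(\<integral>\<^sup>+y. g (\<Sum>t\<in>A. x t, \<Sum>t\<in>B. y t, \<Sum>t\<in>C. y t) \<partial>PiM (T - A) (\<lambda>_. NN \<sigma>)) =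
      (\<integral>\<^sup>+y. \<integral>\<^sup>+w. g (\<Sum>t\<in>A. x t, sqrt (card B) * y, sqrt (card C) * w) \<partial>NN \<sigma> \<partial>NN \<sigma>)"
      using L2[of "T - A" B C "\<lambda>v. g (\<Sum>t\<in>A. x t, fst v, snd v)"] T BT' CT' BC by simp
  qed
  also have "\<dots> = (\<integral>\<^sup>+x. (\<lambda>s. \<integral>\<^sup>+y. \<integral>\<^sup>+w. g (s, sqrt (card B) * y, sqrt (card C) * w) \<partial>NN \<sigma> \<partial>NN \<sigma>) (sqrt (card A) * x) \<partial>NN \<sigma>)"
    by (rule BL[OF fA]) measurable
  finally show ?thesis by simp
qed

lemma GC:
  fixes a b e :: real
  assumes a: "0 \<le> a" and b: "0 \<le> b" and e: "0 \<le> e" and d: "0 < a + b" and i: "0 < b + e"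
  shows "(\<integral>\<^sup>+x. \<integral>\<^sup>+y. \<integral>\<^sup>+w. (if - (a + b) < sqrt a * x + sqrt b * y \<and> - (b + e) < sqrt b * y + sqrt e * w then 1 else 0 :: ennreal) \<partial>NN \<sigma> \<partial>NN \<sigma> \<partial>NN \<sigma>)
    = (\<integral>\<^sup>+x. \<integral>\<^sup>+y. (if x < sqrt (a + b) \<and> x * (b / sqrt ((a + b) * (b + e))) + y * sqrt ((a * b / (a + b) + e) / (b + e)) < sqrt (b + e) then 1 else 0 :: ennreal) \<partial>NN \<sigma> \<partial>NN \<sigma>)"
proof -
  define dd where "dd = a + b"
  define ii where "ii = b + e"
  define p where "p = sqrt (a / dd)"
  define q where "q = sqrt (b / dd)"
  have dd: "0 < dd" and ii: "0 < ii" using d i by (auto simp: dd_def ii_def)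
  have "p\<^sup>2 = a / dd" unfolding p_def using a dd by simp
  moreover have "q\<^sup>2 = b / dd" unfolding q_def using b dd by simp
  ultimately have pq: "p\<^sup>2 + q\<^sup>2 = 1" using dd by (simp add: add_divide_distrib[symmetric] dd_def)
  have p0: "0 \<le> p" and q0: "0 \<le> q" unfolding p_def q_def using a b dd by auto
  have ex: "sqrt a * x + sqrt b * y = sqrt dd * (p * x + q * y)" for x y
    unfolding p_def q_def using a b dd by (simp add: real_sqrt_divide field_simps)
  have ey: "q * (p * x + q * y) + p * (- q * x + p * y) = y" for x y
  proof -
    have "q * (p * x + q * y) + p * (- q * x + p * y) = (p\<^sup>2 + q\<^sup>2) * y" by (simp add: algebra_simps power2_eq_square)
    then show ?thesis using pq by simp
  qed
  define K where "K = (\<lambda>v::real\<times>real. \<integral>\<^sup>+w. (if - dd < sqrt dd * fst v \<and> - ii < sqrt b * (q * fst v + p * snd v) + sqrt e * w then 1 else 0 :: ennreal) \<partial>NN \<sigma>)"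
  have Km: "K \<in> borel_measurable borel" unfolding K_def bp_iff[symmetric] by measurable
  have "(\<integral>\<^sup>+x. \<integral>\<^sup>+y. \<integral>\<^sup>+w. (if - (a + b) < sqrt a * x + sqrt b * y \<and> - (b + e) < sqrt b * y + sqrt e * w then 1 else 0 :: ennreal) \<partial>NN \<sigma> \<partial>NN \<sigma> \<partial>NN \<sigma>)
     = (\<integral>\<^sup>+x. \<integral>\<^sup>+y. K (p * x + q * y, - q * x + p * y) \<partial>NN \<sigma> \<partial>NN \<sigma>)"
    unfolding K_def fst_conv snd_conv ey ex[symmetric] dd_def ii_def by (simp only: ex[unfolded dd_def])
  also have "\<dots> = (\<integral>\<^sup>+u. \<integral>\<^sup>+v. K (u, v) \<partial>NN \<sigma> \<partial>NN \<sigma>)" by (rule rot_N[OF Km pq])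
  also have "\<dots> = (\<integral>\<^sup>+u. \<integral>\<^sup>+v. (if - dd < sqrt dd * u \<and> - ii < sqrt b * q * u + sqrt (b * p\<^sup>2 + e) * v then 1 else 0 :: ennreal) \<partial>NN \<sigma> \<partial>NN \<sigma>)"
  proof (rule nn_integral_cong)
    fix u :: real
    define G where "G = (\<lambda>t. (if - dd < sqrt dd * u \<and> - ii < sqrt b * q * u + t then 1 else 0 :: ennreal))"
    have Gm: "G \<in> borel_measurable borel" unfolding G_def by measurable
    have "(\<integral>\<^sup>+v. K (u, v) \<partial>NN \<sigma>) = (\<integral>\<^sup>+v. \<integral>\<^sup>+w. G (sqrt (b * p\<^sup>2) * v + sqrt e * w) \<partial>NN \<sigma> \<partial>NN \<sigma>)"
      unfolding K_def G_def using p0 b by (simp add: real_sqrt_mult algebra_simps)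
    also have "\<dots> = (\<integral>\<^sup>+v. G (sqrt (b * p\<^sup>2 + e) * v) \<partial>NN \<sigma>)"
      by (rule D1[OF Gm]) (use b e in auto)
    finally show "(\<integral>\<^sup>+v. K (u, v) \<partial>NN \<sigma>) = (\<integral>\<^sup>+v. (if - dd < sqrt dd * u \<and> - ii < sqrt b * q * u + sqrt (b * p\<^sup>2 + e) * v then 1 else 0 :: ennreal) \<partial>NN \<sigma>)"
      unfolding G_def .
  qed
  also have "\<dots> = (\<integral>\<^sup>+u. \<integral>\<^sup>+v. (if - dd < sqrt dd * (- u) \<and> - ii < sqrt b * q * (- u) + sqrt (b * p\<^sup>2 + e) * (- v) then 1 else 0 :: ennreal) \<partial>NN \<sigma> \<partial>NN \<sigma>)"
  proof -
    define F where "F = (\<lambda>v::real\<times>real. (if - dd < sqrt dd * fst v \<and> - ii < sqrt b * q * fst v + sqrt (b * p\<^sup>2 + e) * snd v then 1 else 0 :: ennreal))"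
    have Fm: "F \<in> borel_measurable borel" unfolding F_def bp_iff[symmetric] by measurable
    show ?thesis using rot_N[OF Fm, of "-1" 0] unfolding F_def by simp
  qed
  also have "\<dots> = (\<integral>\<^sup>+x. \<integral>\<^sup>+y. (if x < sqrt (a + b) \<and> x * (b / sqrt ((a + b) * (b + e))) + y * sqrt ((a * b / (a + b) + e) / (b + e)) < sqrt (b + e) then 1 else 0 :: ennreal) \<partial>NN \<sigma> \<partial>NN \<sigma>)"
  proof (intro nn_integral_cong)
    fix u v :: real
    have c1: "- dd < sqrt dd * (- u) \<longleftrightarrow> u < sqrt (a + b)"
    proof -
      have s: "sqrt dd * sqrt dd = dd" using dd by simp
      have k: "sqrt dd * u < sqrt dd * sqrt dd \<longleftrightarrow> u < sqrt dd" using dd by (intro mult_less_cancel_left_pos) simp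
      have "- dd < sqrt dd * (- u) \<longleftrightarrow> u < sqrt dd" using k s by (smt (verit) mult_minus_right)
      then show ?thesis unfolding dd_def .
    qed
    have sq: "sqrt b * q = b / sqrt dd" unfolding q_def using b dd
      by (simp add: real_sqrt_divide)
    have pp: "b * p\<^sup>2 = a * b / (a + b)" unfolding p_def using a dd by (simp add: dd_def)
    have c2: "- ii < sqrt b * q * (- u) + sqrt (b * p\<^sup>2 + e) * (- v) \<longleftrightarrow>
        u * (b / sqrt ((a + b) * (b + e))) + v * sqrt ((a * b / (a + b) + e) / (b + e)) < sqrt (b + e)"
    proof -
      have "- ii < sqrt b * q * (- u) + sqrt (b * p\<^sup>2 + e) * (- v) \<longleftrightarrow>
            (u * (b / sqrt dd) + v * sqrt (b * p\<^sup>2 + e)) < sqrt ii * sqrt ii"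
        using ii sq by (simp add: algebra_simps)
      also have "\<dots> \<longleftrightarrow> (u * (b / sqrt dd) + v * sqrt (b * p\<^sup>2 + e)) / sqrt ii < sqrt ii"
        using ii by (simp add: pos_divide_less_eq)
      also have "(u * (b / sqrt dd) + v * sqrt (b * p\<^sup>2 + e)) / sqrt ii
          = u * (b / sqrt (dd * ii)) + v * sqrt ((b * p\<^sup>2 + e) / ii)"
        unfolding real_sqrt_divide real_sqrt_mult using ii dd by (simp add: field_simps)
      finally show ?thesis unfolding pp dd_def ii_def .
    qed
    show "(if - dd < sqrt dd * (- u) \<and> - ii < sqrt b * q * (- u) + sqrt (b * p\<^sup>2 + e) * (- v) then 1 else 0 :: ennreal)
       = (if u < sqrt (a + b) \<and> u * (b / sqrt ((a + b) * (b + e))) + v * sqrt ((a * b / (a + b) + e) / (b + e)) < sqrt (b + e) then 1 else 0)"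
      using c1 c2 by simp
  qed
  finally show ?thesis .
qed

end



lemma noise_eq: "noise n \<sigma> = PiM {..<n} (\<lambda>_. NN \<sigma>)"
  by (simp add: noise_def NN_def)

definition Aev :: "nat \<Rightarrow> real \<Rightarrow> (nat \<Rightarrow> bool) \<Rightarrow> (nat \<Rightarrow> real) set" where
  "Aev n \<sigma> c = {z \<in> space (noise n \<sigma>).
       sqdist n (\<lambda>t. bpsk zero_word t + z t) (bpsk c) \<le> sqdist n (\<lambda>t. bpsk zero_word t + z t) (bpsk zero_word)}"

definition supp :: "nat \<Rightarrow> (nat \<Rightarrow> bool) \<Rightarrow> nat set" where
  "supp n c = {t. t < n \<and> c t}"

lemma finite_supp[simp]: "finite (supp n c)" by (simp add: supp_def)
lemma supp_sub: "supp n c \<subseteq> {..<n}" by (auto simp: supp_def)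
lemma hw_supp: "hamming_weight n c = card (supp n c)" by (simp add: hamming_weight_def supp_def)

lemma event_char:
  "(sqdist n (\<lambda>t. bpsk zero_word t + z t) (bpsk c) \<le> sqdist n (\<lambda>t. bpsk zero_word t + z t) (bpsk zero_word))
   \<longleftrightarrow> (\<Sum>t\<in>supp n c. z t) \<le> - real (hamming_weight n c)"
proof -
  have "sqdist n (\<lambda>t. bpsk zero_word t + z t) (bpsk c) - sqdist n (\<lambda>t. bpsk zero_word t + z t) (bpsk zero_word)
      = (\<Sum>t<n. if c t then 4 + 4 * z t else 0)"
    unfolding sqdist_def sum_subtractf[symmetric]
    by (rule sum.cong) (auto simp: bpsk_def zero_word_def power2_eq_square algebra_simps)
  also have "\<dots> = (\<Sum>t\<in>supp n c. 4 + 4 * z t)"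
    by (subst sum.inter_filter[symmetric]) (auto simp: supp_def intro!: sum.cong)
  also have "\<dots> = 4 * real (hamming_weight n c) + 4 * (\<Sum>t\<in>supp n c. z t)"
    by (simp add: sum.distrib sum_distrib_left hw_supp)
  finally show ?thesis by linarith
qed

lemma Aev_eq: "Aev n \<sigma> c = {z \<in> space (noise n \<sigma>). (\<Sum>t\<in>supp n c. z t) \<le> - real (hamming_weight n c)}"
  unfolding Aev_def event_char ..

lemma Aev_sets: "Aev n \<sigma> c \<in> sets (noise n \<sigma>)"
proof -
  have [measurable]: "(\<lambda>z. \<Sum>t\<in>supp n c. z t :: real) \<in> borel_measurable (noise n \<sigma>)"
    unfolding noise_eq by (rule borel_measurable_sum) (auto simp: supp_def intro!: measurable_component_singleton)
  show ?thesis unfolding Aev_eq by measurable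
qed

lemma error_event_eq: "error_event n \<sigma> C = (\<Union>c\<in>C - {zero_word}. Aev n \<sigma> c)"
  unfolding error_event_def Aev_def by auto



lemma gauss_f_eq: "0 < \<sigma> \<Longrightarrow> gauss_f \<sigma> x = normal_density 0 \<sigma> x"
  by (simp add: gauss_f_def normal_density_def real_sqrt_mult)

lemma p3_eq:
  fixes a b e :: nat
  assumes \<sigma>: "0 < \<sigma>" and d: "0 < a + b" and i: "0 < b + e"
  shows "p3 \<sigma> (a + b) (b + e) (a + e) = 1 - enn2real (\<integral>\<^sup>+x. \<integral>\<^sup>+y. (if x < sqrt (real a + real b) \<and>
      x * (real b / sqrt ((real a + real b) * (real b + real e))) + y * sqrt ((real a * real b / (real a + real b) + real e) / (real b + real e)) < sqrt (real b + real e)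
      then 1 else 0 :: ennreal) \<partial>NN \<sigma> \<partial>NN \<sigma>)"
proof -
  define A where "A = real a"
  define B where "B = real b"
  define E where "E = real e"
  have A: "0 \<le> A" and B: "0 \<le> B" and E: "0 \<le> E" unfolding A_def B_def E_def by auto
  have D: "0 < A + B" and I: "0 < B + E" using d i unfolding A_def B_def E_def by auto
  define cc where "cc = B / sqrt ((A + B) * (B + E))"
  define ss where "ss = sqrt ((A * B / (A + B) + E) / (B + E))"
  have arg: "(real (a + b) + real (b + e) - real (a + e)) / (2 * sqrt (real (a + b) * real (b + e))) = cc"
    unfolding cc_def A_def B_def E_def by simp
  have pos: "0 < (A + B) * (B + E)" using D I by simp
  have cc0: "0 \<le> cc" unfolding cc_def using B pos by simp
  have "B * B \<le> (A + B) * (B + E)" using A B E by (simp add: algebra_simps)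
  then have "sqrt (B * B) \<le> sqrt ((A + B) * (B + E))" by (rule real_sqrt_le_mono)
  then have "B \<le> sqrt ((A + B) * (B + E))" using B by simp
  then have cc1: "cc \<le> 1" unfolding cc_def using pos by (simp add: divide_le_eq_1)
  have cos: "cos (arccos cc) = cc" using cc0 cc1 by (simp add: cos_arccos)
  have "1 - cc\<^sup>2 = (A * B / (A + B) + E) / (B + E)"
    unfolding cc_def using pos D I by (simp add: power_divide field_simps) (simp add: algebra_simps power2_eq_square)
  then have sin: "sin (arccos cc) = ss" using cc0 cc1 unfolding ss_def by (simp add: sin_arccos)
  define \<Omega> where "\<Omega> = {(\<xi>1::real, \<xi>2::real). \<xi>1 < sqrt (real (a + b)) \<and> \<xi>1 * cc + \<xi>2 * ss < sqrt (real (b + e))}"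
  define F where "F = (\<lambda>v::real\<times>real. if fst v < sqrt (A + B) \<and> fst v * cc + snd v * ss < sqrt (B + E) then 1 else 0 :: ennreal)"
  have Fm: "F \<in> borel_measurable borel" unfolding F_def bp_iff[symmetric] by measurable
  have indF: "ennreal (indicator \<Omega> v) = F v" for v
    unfolding \<Omega>_def F_def A_def B_def E_def by (cases v) auto
  have fm: "(\<lambda>\<xi>. indicator \<Omega> \<xi> * gauss_f \<sigma> (fst \<xi>) * gauss_f \<sigma> (snd \<xi>)) \<in> borel_measurable (lborel \<Otimes>\<^sub>M lborel)"
  proof -
    have "(\<lambda>\<xi>. indicator \<Omega> \<xi> * gauss_f \<sigma> (fst \<xi>) * gauss_f \<sigma> (snd \<xi>)) =
      (\<lambda>\<xi>. (if fst \<xi> < sqrt (A + B) \<and> fst \<xi> * cc + snd \<xi> * ss < sqrt (B + E) then 1 else 0) * normal_density 0 \<sigma> (fst \<xi>) * normal_density 0 \<sigma> (snd \<xi>))"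
      unfolding \<Omega>_def A_def B_def E_def using \<sigma> by (auto simp: gauss_f_eq fun_eq_iff)
    moreover have "(\<lambda>\<xi>::real\<times>real. (if fst \<xi> < sqrt (A + B) \<and> fst \<xi> * cc + snd \<xi> * ss < sqrt (B + E) then 1 else 0) * normal_density 0 \<sigma> (fst \<xi>) * normal_density 0 \<sigma> (snd \<xi>)) \<in> borel_measurable (lborel \<Otimes>\<^sub>M lborel)"
      by measurable
    ultimately show ?thesis by simp
  qed
  have "(\<integral>\<xi>. indicator \<Omega> \<xi> * gauss_f \<sigma> (fst \<xi>) * gauss_f \<sigma> (snd \<xi>) \<partial>(lborel \<Otimes>\<^sub>M lborel))
      = enn2real (\<integral>\<^sup>+\<xi>. ennreal (indicator \<Omega> \<xi> * gauss_f \<sigma> (fst \<xi>) * gauss_f \<sigma> (snd \<xi>)) \<partial>(lborel \<Otimes>\<^sub>M lborel))"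
    by (rule integral_eq_nn_integral[OF fm]) (auto simp: gauss_f_def)
  also have "(\<integral>\<^sup>+\<xi>. ennreal (indicator \<Omega> \<xi> * gauss_f \<sigma> (fst \<xi>) * gauss_f \<sigma> (snd \<xi>)) \<partial>(lborel \<Otimes>\<^sub>M lborel))
      = (\<integral>\<^sup>+\<xi>. F \<xi> * ennreal (normal_density 0 \<sigma> (fst \<xi>) * normal_density 0 \<sigma> (snd \<xi>)) \<partial>(lborel \<Otimes>\<^sub>M lborel))"
    by (rule nn_integral_cong) (simp add: gauss_f_eq[OF \<sigma>] indF[symmetric] ennreal_mult' mult.assoc)
  also have "\<dots> = (\<integral>\<^sup>+x. \<integral>\<^sup>+y. F (x, y) \<partial>NN \<sigma> \<partial>NN \<sigma>)"
    by (rule iter_N[symmetric, OF Fm])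
  finally have main: "(\<integral>\<xi>. indicator \<Omega> \<xi> * gauss_f \<sigma> (fst \<xi>) * gauss_f \<sigma> (snd \<xi>) \<partial>(lborel \<Otimes>\<^sub>M lborel))
      = enn2real (\<integral>\<^sup>+x. \<integral>\<^sup>+y. F (x, y) \<partial>NN \<sigma> \<partial>NN \<sigma>)" .
  show ?thesis
    unfolding p3_def Let_def arg cos sin \<Omega>_def[symmetric] main
    unfolding F_def A_def B_def E_def cc_def ss_def by simp
qed



lemma pair_prob:
  assumes \<sigma>: "0 < \<sigma>" and h1: "1 \<le> hamming_weight n c1" and h: "1 \<le> hamming_weight n c"
  shows "measure (noise n \<sigma>) (Aev n \<sigma> c1 \<union> Aev n \<sigma> c)
     = p3 \<sigma> (hamming_weight n c1) (hamming_weight n c) (hamming_weight n (word_add c c1))"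
proof -
  define S1 where "S1 = supp n c1"
  define S where "S = supp n c"
  define A where "A = S1 - S"
  define B where "B = S1 \<inter> S"
  define Cc where "Cc = S - S1"
  define a where "a = card A"
  define b where "b = card B"
  define e where "e = card Cc"
  have fin: "finite A" "finite B" "finite Cc" unfolding A_def B_def Cc_def S1_def S_def by auto
  have sub: "A \<subseteq> {..<n}" "B \<subseteq> {..<n}" "Cc \<subseteq> {..<n}"
    unfolding A_def B_def Cc_def S1_def S_def using supp_sub by blast+
  have disj: "A \<inter> B = {}" "A \<inter> Cc = {}" "B \<inter> Cc = {}" unfolding A_def B_def Cc_def by auto
  have S1eq: "S1 = A \<union> B" and Seq: "S = B \<union> Cc" unfolding A_def B_def Cc_def by auto
  have hw1: "hamming_weight n c1 = a + b"
    unfolding hw_supp S1_def[symmetric] S1eq a_def b_def using fin disj by (simp add: card_Un_disjoint)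
  have hw2: "hamming_weight n c = b + e"
    unfolding hw_supp S_def[symmetric] Seq b_def e_def using fin disj by (simp add: card_Un_disjoint)
  have "supp n (word_add c c1) = A \<union> Cc"
    unfolding A_def Cc_def S1_def S_def supp_def word_add_def by auto
  then have hw3: "hamming_weight n (word_add c c1) = a + e"
    unfolding hw_supp a_def e_def using fin disj by (simp add: card_Un_disjoint)
  have sum1: "(\<Sum>t\<in>S1. z t) = (\<Sum>t\<in>A. z t) + (\<Sum>t\<in>B. z t)" for z :: "nat \<Rightarrow> real"
    unfolding S1eq using fin disj by (simp add: sum.union_disjoint)
  have sum2: "(\<Sum>t\<in>S. z t) = (\<Sum>t\<in>B. z t) + (\<Sum>t\<in>Cc. z t)" for z :: "nat \<Rightarrow> real"
    unfolding Seq using fin disj by (simp add: sum.union_disjoint)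
  define M where "M = noise n \<sigma>"
  interpret M: prob_space M unfolding M_def noise_eq by (rule PM_prob[OF \<sigma>])
  have ev: "Aev n \<sigma> c1 \<union> Aev n \<sigma> c \<in> M.events" unfolding M_def using Aev_sets by auto
  define compl where "compl = space M - (Aev n \<sigma> c1 \<union> Aev n \<sigma> c)"
  define g where "g = (\<lambda>(P::real, Q::real, R::real). if - (real a + real b) < P + Q \<and> - (real b + real e) < Q + R then 1 else 0 :: ennreal)"
  have gm: "g \<in> borel_measurable (borel \<Otimes>\<^sub>M borel \<Otimes>\<^sub>M borel)" unfolding g_def by measurable
  have "emeasure M compl = (\<integral>\<^sup>+z. indicator compl z \<partial>M)"
    using ev unfolding compl_def by (simp add: nn_integral_indicator)
  also have "\<dots> = (\<integral>\<^sup>+z. g (\<Sum>t\<in>A. z t, \<Sum>t\<in>B. z t, \<Sum>t\<in>Cc. z t) \<partial>M)"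
  proof (rule nn_integral_cong)
    fix z assume z: "z \<in> space M"
    show "indicator compl z = g (\<Sum>t\<in>A. z t, \<Sum>t\<in>B. z t, \<Sum>t\<in>Cc. z t)"
      using z unfolding compl_def g_def Aev_eq M_def S1_def[symmetric] S_def[symmetric] sum1 sum2 hw1 hw2
      by (auto simp: indicator_def)
  qed
  also have "\<dots> = (\<integral>\<^sup>+x. \<integral>\<^sup>+y. \<integral>\<^sup>+w. g (sqrt a * x, sqrt b * y, sqrt e * w) \<partial>NN \<sigma> \<partial>NN \<sigma> \<partial>NN \<sigma>)"
    unfolding M_def noise_eq a_def b_def e_def
    by (rule L3[OF \<sigma> _ sub disj gm]) simp
  also have "\<dots> = (\<integral>\<^sup>+x. \<integral>\<^sup>+y. \<integral>\<^sup>+w. (if - (real a + real b) < sqrt a * x + sqrt b * y \<and> - (real b + real e) < sqrt b * y + sqrt e * w then 1 else 0 :: ennreal) \<partial>NN \<sigma> \<partial>NN \<sigma> \<partial>NN \<sigma>)"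
    unfolding g_def by simp
  also have "\<dots> = (\<integral>\<^sup>+x. \<integral>\<^sup>+y. (if x < sqrt (real a + real b) \<and>
      x * (real b / sqrt ((real a + real b) * (real b + real e))) + y * sqrt ((real a * real b / (real a + real b) + real e) / (real b + real e)) < sqrt (real b + real e)
      then 1 else 0 :: ennreal) \<partial>NN \<sigma> \<partial>NN \<sigma>)"
    by (rule GC[OF \<sigma>]) (use h1 h hw1 hw2 in auto)
  finally have em: "emeasure M compl = \<dots>" .
  have "measure M (Aev n \<sigma> c1 \<union> Aev n \<sigma> c) = 1 - measure M compl"
    unfolding compl_def using M.prob_compl[OF ev] by simp
  also have "\<dots> = p3 \<sigma> (a + b) (b + e) (a + e)"
    unfolding measure_def em by (rule p3_eq[symmetric, OF \<sigma>]) (use h1 h hw1 hw2 in auto)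
  finally show ?thesis unfolding M_def hw1 hw2 hw3 .
qed

lemma Q_prob:
  assumes \<sigma>: "0 < \<sigma>" and h1: "1 \<le> hamming_weight n c1"
  shows "measure (noise n \<sigma>) (Aev n \<sigma> c1) = Qfun (sqrt (hamming_weight n c1) / \<sigma>)"
proof -
  define d where "d = real (hamming_weight n c1)"
  have d: "0 < d" using h1 unfolding d_def by simp
  define M where "M = noise n \<sigma>"
  interpret M: prob_space M unfolding M_def noise_eq by (rule PM_prob[OF \<sigma>])
  have ev: "Aev n \<sigma> c1 \<in> M.events" unfolding M_def using Aev_sets by auto
  define g where "g = (\<lambda>s::real. if s \<le> - d then 1 else 0 :: ennreal)"
  have gm: "g \<in> borel_measurable borel" unfolding g_def by measurable
  have "emeasure M (Aev n \<sigma> c1) = (\<integral>\<^sup>+z. indicator (Aev n \<sigma> c1) z \<partial>M)"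
    using ev by (simp add: nn_integral_indicator)
  also have "\<dots> = (\<integral>\<^sup>+z. g (\<Sum>t\<in>supp n c1. z t) \<partial>M)"
    by (rule nn_integral_cong) (auto simp: M_def Aev_eq g_def d_def indicator_def)
  also have "\<dots> = (\<integral>\<^sup>+x. g (sqrt d * x) \<partial>NN \<sigma>)"
    unfolding M_def noise_eq d_def hw_supp by (rule L1[OF \<sigma> _ supp_sub gm]) simp
  also have "\<dots> = (\<integral>\<^sup>+x. ennreal (normal_density 0 \<sigma> x * (if x \<le> - sqrt d then 1 else 0)) \<partial>lborel)"
  proof -
    have "g (sqrt d * x) = (if x \<le> - sqrt d then 1 else 0)" for x
    proof -
      have s: "sqrt d * sqrt d = d" using d by simp
      have "sqrt d * x \<le> - d \<longleftrightarrow> sqrt d * x \<le> sqrt d * (- sqrt d)" using s by simp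
      also have "\<dots> \<longleftrightarrow> x \<le> - sqrt d" using d by (intro mult_le_cancel_left_pos) simp
      finally show ?thesis unfolding g_def by simp
    qed
    then show ?thesis unfolding NN_def
      by (subst nn_integral_density) (auto intro!: nn_integral_cong simp: gm)
  qed
  also have "\<dots> = ennreal \<sigma> * (\<integral>\<^sup>+t. ennreal (normal_density 0 \<sigma> (0 + (- \<sigma>) * t) * (if 0 + (- \<sigma>) * t \<le> - sqrt d then 1 else 0)) \<partial>lborel)"
    using nn_integral_real_affine[of "\<lambda>x. ennreal (normal_density 0 \<sigma> x * (if x \<le> - sqrt d then 1 else 0))" "- \<sigma>" 0] \<sigma>
    by simp
  also have "\<dots> = (\<integral>\<^sup>+t. ennreal \<sigma> * ennreal (normal_density 0 \<sigma> (0 + (- \<sigma>) * t) * (if 0 + (- \<sigma>) * t \<le> - sqrt d then 1 else 0)) \<partial>lborel)"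
    by (rule nn_integral_cmult[symmetric]) measurable
  also have "\<dots> = (\<integral>\<^sup>+t. ennreal ((if sqrt d / \<sigma> \<le> t then 1 else 0) * (1 / sqrt (2 * pi) * exp (- t\<^sup>2 / 2))) \<partial>lborel)"
  proof (rule nn_integral_cong)
    fix t :: real
    have nd: "\<sigma> * normal_density 0 \<sigma> (- \<sigma> * t) = 1 / sqrt (2 * pi) * exp (- t\<^sup>2 / 2)"
      using \<sigma> by (simp add: normal_density_def real_sqrt_mult power_mult_distrib)
    have le: "- \<sigma> * t \<le> - sqrt d \<longleftrightarrow> sqrt d / \<sigma> \<le> t"
      using \<sigma> by (simp add: divide_le_eq mult.commute)
    show "ennreal \<sigma> * ennreal (normal_density 0 \<sigma> (0 + (- \<sigma>) * t) * (if 0 + (- \<sigma>) * t \<le> - sqrt d then 1 else 0))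
      = ennreal ((if sqrt d / \<sigma> \<le> t then 1 else 0) * (1 / sqrt (2 * pi) * exp (- t\<^sup>2 / 2)))"
      using \<sigma> nd le by (simp add: ennreal_mult'[symmetric] mult.assoc[symmetric])
  qed
  also have "\<dots> = (\<integral>\<^sup>+t. ennreal (indicator {sqrt d / \<sigma><..} t *\<^sub>R (1 / sqrt (2 * pi) * exp (- t\<^sup>2 / 2))) \<partial>lborel)"
  proof (rule nn_integral_cong_AE)
    show "AE t in lborel. ennreal ((if sqrt d / \<sigma> \<le> t then 1 else 0) * (1 / sqrt (2 * pi) * exp (- t\<^sup>2 / 2)))
       = ennreal (indicator {sqrt d / \<sigma><..} t *\<^sub>R (1 / sqrt (2 * pi) * exp (- t\<^sup>2 / 2)))"
      using AE_lborel_singleton[of "sqrt d / \<sigma>"] by eventually_elim (auto simp: indicator_def)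
  qed
  finally have em: "emeasure M (Aev n \<sigma> c1) = \<dots>" .
  have "Qfun (sqrt d / \<sigma>) = enn2real (\<integral>\<^sup>+t. ennreal (indicator {sqrt d / \<sigma><..} t *\<^sub>R (1 / sqrt (2 * pi) * exp (- t\<^sup>2 / 2))) \<partial>lborel)"
    unfolding Qfun_def set_lebesgue_integral_def
    by (rule integral_eq_nn_integral) auto
  then show ?thesis unfolding measure_def em M_def[symmetric] d_def by simp
qed



lemma hw_le: "hamming_weight n c \<le> n"
proof -
  have "card (supp n c) \<le> card {..<n}" by (rule card_mono) (auto simp: supp_def)
  then show ?thesis by (simp add: hw_supp)
qed

lemma hw_pos: assumes "c \<in> words n" "c \<noteq> zero_word" shows "1 \<le> hamming_weight n c"
proof -
  obtain t where "c t" using assms(2) unfolding zero_word_def by auto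
  then have "t < n" using assms(1) unfolding words_def using not_le by blast
  then have "supp n c \<noteq> {}" using \<open>c t\<close> by (auto simp: supp_def)
  then show ?thesis by (simp add: hw_supp Suc_le_eq card_gt_0_iff)
qed

lemma hw_zero: "hamming_weight n zero_word = 0"
  by (simp add: hamming_weight_def zero_word_def)

lemma regroup:
  fixes \<phi> :: "nat \<Rightarrow> nat \<Rightarrow> real" and C :: "(nat \<Rightarrow> bool) set"
  assumes fin: "finite C" and C2: "C2 = C - {zero_word, c1}"
    and rng: "\<And>c. c \<in> C2 \<Longrightarrow> hamming_weight n c \<in> {1..n} \<and> hamming_weight n (word_add c c1) \<in> {1..n}"
  shows "(\<Sum>c\<in>C2. \<phi> (hamming_weight n c) (hamming_weight n (word_add c c1)))
     = (\<Sum>i\<in>{1..n}. \<Sum>j\<in>{1..n}. real (triangle_spectrum n C c1 i j) * \<phi> i j)"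
proof -
  have fin2: "finite C2" using fin C2 by simp
  have "(\<Sum>i\<in>{1..n}. \<Sum>j\<in>{1..n}. real (triangle_spectrum n C c1 i j) * \<phi> i j)
     = (\<Sum>i\<in>{1..n}. \<Sum>j\<in>{1..n}. \<Sum>c\<in>C2. if hamming_weight n c = i then (if hamming_weight n (word_add c c1) = j then \<phi> i j else 0) else 0)"
  proof (intro sum.cong refl)
    fix i j assume i: "i \<in> {1..n}" and j: "j \<in> {1..n}"
    have set: "{c \<in> C. hamming_weight n c = i \<and> hamming_weight n (word_add c c1) = j}
       = {c \<in> C2. hamming_weight n c = i \<and> hamming_weight n (word_add c c1) = j}"
    proof -
      have "hamming_weight n (word_add c1 c1) = 0"
        by (simp add: hamming_weight_def word_add_def)
      then show ?thesis using i j hw_zero C2 by auto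
    qed
    have "(\<Sum>c\<in>C2. if hamming_weight n c = i then (if hamming_weight n (word_add c c1) = j then \<phi> i j else 0) else 0)
      = (\<Sum>c\<in>C2. if hamming_weight n c = i \<and> hamming_weight n (word_add c c1) = j then \<phi> i j else 0)"
      by (intro sum.cong) auto
    also have "\<dots> = (\<Sum>c\<in>{c \<in> C2. hamming_weight n c = i \<and> hamming_weight n (word_add c c1) = j}. \<phi> i j)"
      using fin2 by (subst sum.inter_filter[symmetric]) auto
    also have "\<dots> = real (triangle_spectrum n C c1 i j) * \<phi> i j"
      unfolding triangle_spectrum_def set by simp
    finally show "real (triangle_spectrum n C c1 i j) * \<phi> i j = (\<Sum>c\<in>C2. if hamming_weight n c = i then (if hamming_weight n (word_add c c1) = j then \<phi> i j else 0) else 0)" by simp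
  qed
  also have "\<dots> = (\<Sum>c\<in>C2. \<Sum>i\<in>{1..n}. \<Sum>j\<in>{1..n}. if hamming_weight n c = i then (if hamming_weight n (word_add c c1) = j then \<phi> i j else 0) else 0)"
    by (simp add: sum.swap[of _ C2] sum.swap[of _ "{1..n}" C2])
  also have "\<dots> = (\<Sum>c\<in>C2. \<phi> (hamming_weight n c) (hamming_weight n (word_add c c1)))"
  proof (rule sum.cong[OF refl])
    fix c assume c: "c \<in> C2"
    have "(\<Sum>i\<in>{1..n}. \<Sum>j\<in>{1..n}. if hamming_weight n c = i then (if hamming_weight n (word_add c c1) = j then \<phi> i j else 0) else 0)
       = (\<Sum>i\<in>{1..n}. if hamming_weight n c = i then (\<Sum>j\<in>{1..n}. if hamming_weight n (word_add c c1) = j then \<phi> i j else 0) else 0)"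
      by (intro sum.cong) auto
    also have "\<dots> = \<phi> (hamming_weight n c) (hamming_weight n (word_add c c1))"
      using rng[OF c] by (simp add: sum.delta)
    finally show "(\<Sum>i\<in>{1..n}. \<Sum>j\<in>{1..n}. if hamming_weight n c = i then (if hamming_weight n (word_add c c1) = j then \<phi> i j else 0) else 0)
       = \<phi> (hamming_weight n c) (hamming_weight n (word_add c c1))" .
  qed
  finally show ?thesis by simp
qed



theorem theorem1:
  fixes n k d1 :: nat and \<sigma> :: real and C :: "(nat \<Rightarrow> bool) set" and c1 :: "nat \<Rightarrow> bool"
  assumes "binary_linear_code n k C"
    and "\<sigma> > 0"
    and "c1 \<in> C"
    and "hamming_weight n c1 = d1"
    and "d1 \<ge> 1"
  shows "measure (noise n \<sigma>) (error_event n \<sigma> C)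
    \<le> - (2 ^ k - 3) * Qfun (sqrt (real d1) / \<sigma>)
      + (\<Sum>i\<in>{1..n}. \<Sum>j\<in>{1..n}. real (triangle_spectrum n C c1 i j) * p3 \<sigma> d1 i j)"
proof -
  note code = assms(1)[unfolded binary_linear_code_def]
  have \<sigma>: "0 < \<sigma>" using assms(2) .
  have cw: "C \<subseteq> words n" and z: "zero_word \<in> C" and cl: "\<forall>c\<in>C. \<forall>d\<in>C. word_add c d \<in> C" and card: "card C = 2 ^ k"
    using code by auto
  have fin: "finite C" using card by (metis card.infinite power_not_zero zero_neq_numeral)
  have c1z: "c1 \<noteq> zero_word" using assms(4,5) hw_zero by auto
  have h1: "1 \<le> hamming_weight n c1" using assms(4,5) by simp
  define C2 where "C2 = C - {zero_word, c1}"
  have cardC2: "real (card C2) = 2 ^ k - 2"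
  proof -
    have "card C2 = card C - card {zero_word, c1}" unfolding C2_def
      using z assms(3) fin by (intro card_Diff_subset) auto
    moreover have "card {zero_word, c1} = 2" using c1z by simp
    moreover have "2 \<le> card C" using z assms(3) c1z fin
      by (metis \<open>card {zero_word, c1} = 2\<close> card_mono empty_subsetI insert_subset)
    ultimately show ?thesis using card by (simp add: of_nat_diff)
  qed
  have fin2: "finite C2" using fin unfolding C2_def by simp
  have rng: "hamming_weight n c \<in> {1..n} \<and> hamming_weight n (word_add c c1) \<in> {1..n}" if c: "c \<in> C2" for c
  proof -
    have cC: "c \<in> C" "c \<noteq> zero_word" "c \<noteq> c1" using c unfolding C2_def by auto
    have "word_add c c1 \<in> words n" using cw cC(1) assms(3) unfolding words_def word_add_def by auto
    moreover have "word_add c c1 \<noteq> zero_word"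
    proof
      assume "word_add c c1 = zero_word"
      then have "c = c1" unfolding word_add_def zero_word_def by (auto simp: fun_eq_iff)
      then show False using cC by simp
    qed
    ultimately have "1 \<le> hamming_weight n (word_add c c1)" by (rule hw_pos)
    moreover have "1 \<le> hamming_weight n c" using cC cw by (intro hw_pos) auto
    ultimately show ?thesis using hw_le by auto
  qed
  define M where "M = noise n \<sigma>"
  interpret M: prob_space M unfolding M_def noise_eq by (rule PM_prob[OF \<sigma>])
  have evs: "Aev n \<sigma> c \<in> M.events" for c unfolding M_def using Aev_sets by auto
  define A1 where "A1 = Aev n \<sigma> c1"
  have E: "error_event n \<sigma> C = A1 \<union> (\<Union>c\<in>C2. Aev n \<sigma> c - A1)"
    unfolding error_event_eq A1_def C2_def using assms(3) c1z by auto
  have "measure M (error_event n \<sigma> C) \<le> measure M A1 + measure M (\<Union>c\<in>C2. Aev n \<sigma> c - A1)"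
    unfolding E using evs unfolding A1_def using fin2 by (intro measure_subadditive) (auto simp: M.emeasure_eq_measure intro!: sets.Diff sets.finite_UN)
  also have "measure M (\<Union>c\<in>C2. Aev n \<sigma> c - A1) \<le> (\<Sum>c\<in>C2. measure M (Aev n \<sigma> c - A1))"
    using evs fin2 unfolding A1_def by (intro M.finite_measure_subadditive_finite) auto
  also have "(\<Sum>c\<in>C2. measure M (Aev n \<sigma> c - A1)) = (\<Sum>c\<in>C2. p3 \<sigma> d1 (hamming_weight n c) (hamming_weight n (word_add c c1)) - measure M A1)"
  proof (rule sum.cong[OF refl])
    fix c assume c: "c \<in> C2"
    have "measure M (A1 \<union> Aev n \<sigma> c) = measure M (A1 \<union> (Aev n \<sigma> c - A1))" by (simp add: Un_Diff_cancel)
    also have "\<dots> = measure M A1 + measure M (Aev n \<sigma> c - A1)"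
      using evs unfolding A1_def by (intro M.finite_measure_Union) auto
    finally have "measure M (Aev n \<sigma> c - A1) = measure M (A1 \<union> Aev n \<sigma> c) - measure M A1" by simp
    also have "measure M (A1 \<union> Aev n \<sigma> c) = p3 \<sigma> d1 (hamming_weight n c) (hamming_weight n (word_add c c1))"
      unfolding M_def A1_def using pair_prob[OF \<sigma> h1, of c] rng[OF c] assms(4) by simp
    finally show "measure M (Aev n \<sigma> c - A1) = p3 \<sigma> d1 (hamming_weight n c) (hamming_weight n (word_add c c1)) - measure M A1" .
  qed
  also have "\<dots> = (\<Sum>c\<in>C2. p3 \<sigma> d1 (hamming_weight n c) (hamming_weight n (word_add c c1))) - (2 ^ k - 2) * measure M A1"
    by (simp add: sum_subtractf cardC2)
  also have "(\<Sum>c\<in>C2. p3 \<sigma> d1 (hamming_weight n c) (hamming_weight n (word_add c c1)))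
      = (\<Sum>i\<in>{1..n}. \<Sum>j\<in>{1..n}. real (triangle_spectrum n C c1 i j) * p3 \<sigma> d1 i j)"
    by (rule regroup[OF fin C2_def rng])
  also have "measure M A1 = Qfun (sqrt (real d1) / \<sigma>)"
    unfolding M_def A1_def using Q_prob[OF \<sigma> h1] assms(4) by simp
  finally show ?thesis unfolding M_def by (simp add: algebra_simps)
qed


end
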